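(* Let $n$ be a parameter and let $p=p(n)$ be a positive integer with $p=O(2^{n^k})$ for some constant $k$. Then for any polynomial $s(n)$ there is a polynomial $t(n)$ such that whenever $q$ is an integer with $q\geq t(n)\,p$, for the superpositions $\boldsymbol\beta=\mathrm{FT}_p(\boldsymbol\alpha)$ and $\boldsymbol\gamma=\mathrm{FT}_q(\boldsymbol\alpha)$ of an input superposition $\boldsymbol\alpha$ we have $$\|\mathcal D_{\boldsymbol\beta}-\mathcal D_{\boldsymbol\gamma}\|_1=\sum_{i=0}^{p-1}\left|\mathcal D_{\boldsymbol\beta}(i)-\mathcal D_{\boldsymbol\gamma}(i)\right|\leq \frac{1}{s(n)}.$$
   Context: Write $[p]=\{0,1,\dots,p-1\}$ and $\omega_N=e^{2\pi i/N}$. An input superposition is a unit vector $\boldsymbol\alpha=\sum_{i=0}^{p-1}\alpha_i|i\rangle\in\mathbb C^p$. For an integer $N\ge p$, the Fourier transform over $\mathbb Z_N$ of $\boldsymbol\alpha$ (viewed as a vector in $\mathbb C^N$ with zero entries at indices $\ge p$) is $\mathrm{FT}_N(\boldsymbol\alpha)=\sum_{c=0}^{N-1}\left(\frac{1}{\sqrt N}\sum_{i=0}^{p-1}\omega_N^{ic}\alpha_i\right)|c\rangle$. Write $\boldsymbol\beta=\sum_{i=0}^{p-1}\beta_i|i\rangle$ and $\boldsymbol\gamma=\sum_{i=0}^{q-1}\gamma_i|i\rangle$ with $q>p$. For $i\in[p]$ let $i'=\lfloor \frac{q}{p}i\rfloor$. Define the distributions on $[p]$: $\mathcal D_{\boldsymbol\beta}(i)=|\beta_i|^2$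 and $\mathcal D_{\boldsymbol\gamma}(i)=\frac{|\gamma_{i'}|^2}{\sum_{l\in[p]}|\gamma_{l'}|^2}$ (the distribution of $i$ obtained by measuring $\boldsymbol\gamma$ and conditioning on the outcome being of the form $i'$). *)

theory Defs
  imports "HOL-Analysis.Analysis" "HOL-Computational_Algebra.Polynomial" "HOL-Library.Landau_Symbols"
begin

definition omega :: "nat \<Rightarrow> complex" where
  "omega N = exp (2 * of_real pi * \<i> / of_nat N)"

text \<open>Fourier transform over Z_N of a superposition alpha on [p] (zero-padded),
  coefficient at basis state c.\<close>
definition FT :: "nat \<Rightarrow> nat \<Rightarrow> (nat \<Rightarrow> complex) \<Rightarrow> nat \<Rightarrow> complex" where
  "FT N p \<alpha> c = (1 / of_real (sqrt (real N))) * (\<Sum>i<p. omega N ^ (i * c) * \<alpha> i)"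

definition unit_superposition :: "nat \<Rightarrow> (nat \<Rightarrow> complex) \<Rightarrow> bool" where
  "unit_superposition p \<alpha> \<longleftrightarrow> (\<Sum>i<p. (cmod (\<alpha> i))\<^sup>2) = 1"

definition idx' :: "nat \<Rightarrow> nat \<Rightarrow> nat \<Rightarrow> nat" where
  "idx' p q i = nat \<lfloor>real q / real p * real i\<rfloor>"

definition D_beta :: "nat \<Rightarrow> (nat \<Rightarrow> complex) \<Rightarrow> nat \<Rightarrow> real" where
  "D_beta p \<beta> i = (cmod (\<beta> i))\<^sup>2"

definition D_gamma :: "nat \<Rightarrow> nat \<Rightarrow> (nat \<Rightarrow> complex) \<Rightarrow> nat \<Rightarrow> real" where
  "D_gamma p q \<gamma> i = (cmod (\<gamma> (idx' p q i)))\<^sup>2 / (\<Sum>l<p. (cmod (\<gamma> (idx' p q l)))\<^sup>2)"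

end

theory Submission
  imports Defs "HOL-Probability.Characteristic_Functions"
begin

lemma omega_iexp: "omega N ^ j = iexp (2 * pi * j / N)"
proof -
  have "omega N ^ j = exp (of_nat j * (2 * of_real pi * \<i> / of_nat N))"
    unfolding omega_def by (simp only: exp_of_nat_mult)
  also have "of_nat j * (2 * of_real pi * \<i> / of_nat N) = \<i> * complex_of_real (2 * pi * j / N)"
    by simp
  finally show ?thesis .
qed

lemma norm_omega_pow [simp]: "cmod (omega N ^ j) = 1"
  by (simp add: omega_iexp)

lemma norm_omega [simp]: "cmod (omega N) = 1"
  using norm_omega_pow[of N 1] by simp

lemma omega_pow_N: "0 < N \<Longrightarrow> omega N ^ N = 1"
  by (simp add: omega_iexp exp_eq_1)

lemma omega_pow_ne1: assumes "0 < d" "d < N" shows "omega N ^ d \<noteq> 1"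
proof
  assume "omega N ^ d = 1"
  then obtain n :: int where n: "2 * pi * d / N = of_int (2*n) * pi"
    by (auto simp: omega_iexp exp_eq_1)
  then have "real d / N = of_int n" using assms by (simp add: field_simps)
  moreover have "0 < real d / N" "real d / N < 1" using assms by auto
  ultimately show False
    by (metis of_int_0_less_iff of_int_less_1_iff not_less zero_less_imp_eq_int int_one_le_iff_zero_less le_less_trans)
qed

lemma omega_mult: assumes "0 < b" shows "omega (a*b) ^ b = omega a"
proof -
  have "omega (a*b) ^ b = iexp (2 * pi * b / (a*b))" by (simp add: omega_iexp)
  also have "2 * pi * b / (a*b) = 2 * pi * 1 / a" using assms by (simp add: field_simps)
  finally show ?thesis using omega_iexp[of a 1] by simp
qed

lemma omega_diff: "cmod (omega N ^ j - 1) \<le> 2 * pi * j / N"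
proof -
  have "cmod (omega N ^ j - 1) \<le> \<bar>2 * pi * j / N\<bar>"
    unfolding omega_iexp using iexp_approx1[of "2 * pi * j / N" 0] by simp
  also have "\<dots> = 2 * pi * j / N" by simp
  finally show ?thesis .
qed

lemma cnj_omega_pow: "cnj (omega N ^ j) = inverse (omega N ^ j)"
proof -
  have "omega N ^ j * cnj (omega N ^ j) = 1"
    using complex_norm_square[of "omega N ^ j"] by simp
  then show ?thesis by (metis inverse_unique)
qed

lemma orth:
  assumes "j < N" "l < N"
  shows "(\<Sum>k<N. omega N ^ (j*k) * cnj (omega N ^ (l*k))) = (if j = l then of_nat N else 0)"
proof -
  define w where "w = omega N"
  have w0: "w \<noteq> 0" using norm_omega[of N] unfolding w_def by (metis norm_zero zero_neq_one)
  define u where "u = w ^ j * inverse (w ^ l)"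
  have termk: "omega N ^ (j*k) * cnj (omega N ^ (l*k)) = u ^ k" for k
    unfolding cnj_omega_pow u_def w_def by (simp add: power_mult power_mult_distrib power_inverse)
  show ?thesis
  proof (cases "j = l")
    case True
    then have "u = 1" using w0 by (simp add: u_def)
    then show ?thesis using True termk by simp
  next
    case False
    have N0: "0 < N" using assms by auto
    have "u \<noteq> 1"
    proof
      assume "u = 1"
      then have eq: "w ^ j = w ^ l" using w0 by (simp add: u_def field_simps)
      show False
      proof (cases "j < l")
        case True
        then have "w ^ l = w ^ j * w ^ (l - j)" by (simp add: power_add[symmetric])
        then have "w ^ (l - j) = 1" using eq w0 by simp
        then show False using omega_pow_ne1[of "l-j" N] True assms unfolding w_def by auto
      next
        case f: False
        then have "l < j" using False by auto
        then have "w ^ j = w ^ l * w ^ (j - l)" by (simp add: power_add[symmetric])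
        then have "w ^ (j - l) = 1" using eq w0 by simp
        then show False using omega_pow_ne1[of "j-l" N] \<open>l < j\<close> assms unfolding w_def by auto
      qed
    qed
    moreover have "u ^ N = 1"
    proof -
      have "u ^ N = (w ^ N) ^ j * inverse ((w ^ N) ^ l)"
        by (simp add: u_def power_mult_distrib power_inverse flip: power_mult) (simp add: mult.commute)
      then show ?thesis using omega_pow_N[OF N0] unfolding w_def by simp
    qed
    ultimately have "(\<Sum>k<N. u ^ k) = 0" by (simp add: geometric_sum)
    then show ?thesis using False by (simp only: termk) simp
  qed
qed

lemma parseval:
  assumes "P \<le> N"
  shows "(\<Sum>k<N. (cmod (\<Sum>j<P. c j * omega N ^ (j*k)))\<^sup>2) = real N * (\<Sum>j<P. (cmod (c j))\<^sup>2)"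
proof -
  define w where "w = omega N"
  have "complex_of_real (\<Sum>k<N. (cmod (\<Sum>j<P. c j * w ^ (j*k)))\<^sup>2)
      = (\<Sum>k<N. (\<Sum>j<P. c j * w ^ (j*k)) * cnj (\<Sum>l<P. c l * w ^ (l*k)))"
    by (simp only: of_real_sum complex_norm_square)
  also have "\<dots> = (\<Sum>k<N. \<Sum>j<P. \<Sum>l<P. c j * cnj (c l) * (w ^ (j*k) * cnj (w ^ (l*k))))"
    apply (simp add: sum_distrib_left sum_distrib_right cnj_sum mult_ac)
    apply (rule sum.cong[OF refl])
    apply (rule sum.swap)
    done
  also have "\<dots> = (\<Sum>j<P. \<Sum>l<P. \<Sum>k<N. c j * cnj (c l) * (w ^ (j*k) * cnj (w ^ (l*k))))"
    by (subst sum.swap) (simp add: sum.swap[of _ "{..<N}"])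
  also have "\<dots> = (\<Sum>j<P. \<Sum>l<P. c j * cnj (c l) * (if j = l then of_nat N else 0))"
  proof (intro sum.cong refl)
    fix j l assume "j \<in> {..<P}" "l \<in> {..<P}"
    then have jl: "j < N" "l < N" using assms by auto
    have "(\<Sum>k<N. c j * cnj (c l) * (w ^ (j*k) * cnj (w ^ (l*k))))
        = c j * cnj (c l) * (\<Sum>k<N. w ^ (j*k) * cnj (w ^ (l*k)))"
      by (simp only: sum_distrib_left)
    also have "\<dots> = c j * cnj (c l) * (if j = l then of_nat N else 0)"
      unfolding w_def orth[OF jl] ..
    finally show "(\<Sum>k<N. c j * cnj (c l) * (w ^ (j*k) * cnj (w ^ (l*k))))
        = c j * cnj (c l) * (if j = l then of_nat N else 0)" .
  qed
  also have "\<dots> = (\<Sum>j<P. c j * cnj (c j) * of_nat N)"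
    by (simp add: if_distrib cong: if_cong)
  also have "\<dots> = complex_of_real (real N * (\<Sum>j<P. (cmod (c j))\<^sup>2))"
    by (simp add: complex_norm_square[symmetric] sum_distrib_left mult_ac)
  finally show ?thesis unfolding w_def using of_real_eq_iff by blast
qed


lemma L2_sq: "(L2_set f A)\<^sup>2 = (\<Sum>i\<in>A. (f i)\<^sup>2)"
  unfolding L2_set_def by (simp add: sum_nonneg)

lemma dist_lemma:
  fixes b g :: "nat \<Rightarrow> complex"
  assumes fin: "finite A"
    and b1: "(\<Sum>i\<in>A. (cmod (b i))\<^sup>2) = 1"
    and eb: "(\<Sum>i\<in>A. (cmod (b i - g i))\<^sup>2) \<le> e\<^sup>2" and e0: "0 \<le> e" and e1: "e < 1"
  shows "(\<Sum>i\<in>A. \<bar>(cmod (b i))\<^sup>2 - (cmod (g i))\<^sup>2 / (\<Sum>l\<in>A. (cmod (g l))\<^sup>2)\<bar>) \<le> 6 * e"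
proof -
  define B where "B = L2_set (\<lambda>i. cmod (b i)) A"
  define E where "E = L2_set (\<lambda>i. cmod (b i - g i)) A"
  define Gn where "Gn = L2_set (\<lambda>i. cmod (g i)) A"
  define G where "G = (\<Sum>l\<in>A. (cmod (g l))\<^sup>2)"
  have B1: "B = 1" unfolding B_def L2_set_def b1 by simp
  have "E\<^sup>2 \<le> e\<^sup>2" unfolding E_def L2_sq using eb .
  then have Ee: "E \<le> e" using e0 unfolding E_def by (simp add: power_mono_iff)
  have GG: "G = Gn\<^sup>2" unfolding G_def Gn_def L2_sq ..
  have "Gn \<le> L2_set (\<lambda>i. cmod (b i) + cmod (b i - g i)) A"
    unfolding Gn_def by (rule L2_set_mono) (auto simp: norm_minus_commute[of "b i" "g i" for i]
      intro: order_trans[OF norm_triangle_ineq2] simp flip: diff_le_eq)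
  also have "\<dots> \<le> B + E" unfolding B_def E_def by (rule L2_set_triangle_ineq)
  finally have Gup: "Gn \<le> 1 + e" using B1 Ee by simp
  have "B \<le> L2_set (\<lambda>i. cmod (g i) + cmod (b i - g i)) A"
    unfolding B_def by (rule L2_set_mono) (auto intro: order_trans[OF norm_triangle_ineq2] simp flip: diff_le_eq)
  also have "\<dots> \<le> Gn + E" unfolding Gn_def E_def by (rule L2_set_triangle_ineq)
  finally have Glo: "1 - e \<le> Gn" using B1 Ee by simp
  have Gpos: "G > 0" unfolding GG using Glo e1 by simp
  have G1: "\<bar>G - 1\<bar> \<le> e * (2 + e)"
  proof -
    have Gn0: "0 \<le> Gn" unfolding Gn_def by simp
    have "G - 1 = (Gn - 1) * (Gn + 1)" unfolding GG by (simp add: power2_eq_square algebra_simps)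
    then have "\<bar>G - 1\<bar> = \<bar>Gn - 1\<bar> * (Gn + 1)" using Gn0 by (simp add: abs_mult)
    also have "\<dots> \<le> e * (2 + e)"
      using Gup Glo e0 Gn0 by (intro mult_mono) auto
    finally show ?thesis .
  qed
  have S1: "(\<Sum>i\<in>A. \<bar>(cmod (b i))\<^sup>2 - (cmod (g i))\<^sup>2\<bar>) \<le> e * (2 + e)"
  proof -
    have "(\<Sum>i\<in>A. \<bar>(cmod (b i))\<^sup>2 - (cmod (g i))\<^sup>2\<bar>)
        \<le> (\<Sum>i\<in>A. \<bar>cmod (b i - g i)\<bar> * \<bar>cmod (b i) + cmod (g i)\<bar>)"
    proof (rule sum_mono)
      fix i
      have "\<bar>(cmod (b i))\<^sup>2 - (cmod (g i))\<^sup>2\<bar> = \<bar>cmod (b i) - cmod (g i)\<bar> * (cmod (b i) + cmod (g i))"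
      proof -
        have "(cmod (b i))\<^sup>2 - (cmod (g i))\<^sup>2 = (cmod (b i) - cmod (g i)) * (cmod (b i) + cmod (g i))"
          by (simp add: power2_eq_square algebra_simps)
        then show ?thesis by (simp add: abs_mult)
      qed
      also have "\<dots> \<le> cmod (b i - g i) * (cmod (b i) + cmod (g i))"
        by (intro mult_right_mono norm_triangle_ineq3) auto
      finally show "\<bar>(cmod (b i))\<^sup>2 - (cmod (g i))\<^sup>2\<bar> \<le> \<bar>cmod (b i - g i)\<bar> * \<bar>cmod (b i) + cmod (g i)\<bar>"
        by simp
    qed
    also have "\<dots> \<le> E * L2_set (\<lambda>i. cmod (b i) + cmod (g i)) A"
      unfolding E_def by (rule L2_set_mult_ineq)
    also have "\<dots> \<le> e * (B + Gn)"
      using Ee e0 L2_set_triangle_ineq[of "\<lambda>i. cmod (b i)" "\<lambda>i. cmod (g i)" A]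
      unfolding B_def Gn_def E_def by (intro mult_mono) auto
    also have "\<dots> \<le> e * (2 + e)" using B1 Gup e0 by (intro mult_left_mono) auto
    finally show ?thesis .
  qed
  have "(\<Sum>i\<in>A. \<bar>(cmod (b i))\<^sup>2 - (cmod (g i))\<^sup>2 / G\<bar>)
      \<le> (\<Sum>i\<in>A. \<bar>(cmod (b i))\<^sup>2 - (cmod (g i))\<^sup>2\<bar> + (cmod (g i))\<^sup>2 * \<bar>1 - 1 / G\<bar>)"
  proof (rule sum_mono)
    fix i
    have "(cmod (b i))\<^sup>2 - (cmod (g i))\<^sup>2 / G = ((cmod (b i))\<^sup>2 - (cmod (g i))\<^sup>2) + (cmod (g i))\<^sup>2 * (1 - 1 / G)"
      by (simp add: algebra_simps)
    then show "\<bar>(cmod (b i))\<^sup>2 - (cmod (g i))\<^sup>2 / G\<bar> \<le> \<bar>(cmod (b i))\<^sup>2 - (cmod (g i))\<^sup>2\<bar> + (cmod (g i))\<^sup>2 * \<bar>1 - 1 / G\<bar>"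
      by (metis abs_triangle_ineq abs_mult abs_power2 abs_norm_cancel)
  qed
  also have "\<dots> = (\<Sum>i\<in>A. \<bar>(cmod (b i))\<^sup>2 - (cmod (g i))\<^sup>2\<bar>) + G * \<bar>1 - 1 / G\<bar>"
    by (simp add: sum.distrib G_def sum_distrib_right)
  also have "G * \<bar>1 - 1 / G\<bar> = \<bar>G - 1\<bar>"
  proof -
    have "G * (1 - 1 / G) = G - 1" using Gpos by (simp add: field_simps)
    then show ?thesis using Gpos by (metis abs_mult abs_of_pos)
  qed
  finally have "(\<Sum>i\<in>A. \<bar>(cmod (b i))\<^sup>2 - (cmod (g i))\<^sup>2 / G\<bar>) \<le> 2 * (e * (2 + e))"
    using S1 G1 by simp
  also have "\<dots> \<le> 6 * e" using e0 e1 by (simp add: algebra_simps) (metis less_imp_le mult_left_le)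
  finally show ?thesis unfolding G_def .
qed


lemma cs_card:
  fixes h :: "nat \<Rightarrow> complex"
  assumes "finite S"
  shows "(cmod (\<Sum>k\<in>S. h k))\<^sup>2 \<le> real (card S) * (\<Sum>k\<in>S. (cmod (h k))\<^sup>2)"
proof -
  have "cmod (\<Sum>k\<in>S. h k) \<le> (\<Sum>k\<in>S. \<bar>cmod (h k)\<bar> * \<bar>1\<bar>)"
    by (simp add: norm_sum)
  also have "\<dots> \<le> L2_set (\<lambda>k. cmod (h k)) S * L2_set (\<lambda>k. 1) S"
    by (rule L2_set_mult_ineq)
  finally have "(cmod (\<Sum>k\<in>S. h k))\<^sup>2 \<le> (L2_set (\<lambda>k. cmod (h k)) S * L2_set (\<lambda>k. 1) S)\<^sup>2"
    by (simp add: power_mono)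
  also have "\<dots> = (\<Sum>k\<in>S. (cmod (h k))\<^sup>2) * real (card S)"
    by (simp add: power_mult_distrib L2_sq)
  finally show ?thesis by (simp add: mult.commute)
qed

lemma diff_est:
  fixes \<alpha> :: "nat \<Rightarrow> complex" and P q :: nat
  assumes P0: "0 < P" and Pq: "P \<le> q"
  defines "F \<equiv> (\<lambda>k. \<Sum>j<P. \<alpha> j * omega (P*q) ^ (j*k))"
  shows "(\<Sum>i<P. (cmod (F (i*q) - F ((i*q div P)*P)))\<^sup>2)
           \<le> 4 * pi\<^sup>2 * real P ^ 2 / real q * (\<Sum>j<P. (cmod (\<alpha> j))\<^sup>2)"
proof -
  define N where "N = P*q"
  define w where "w = omega N"
  have q0: "0 < q" using P0 Pq by auto
  have PN: "P \<le> N" unfolding N_def using q0 by simp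
  define h where "h k = F (Suc k) - F k" for k
  have h_eq: "h k = (\<Sum>j<P. (\<alpha> j * (w ^ j - 1)) * w ^ (j*k))" for k
    unfolding h_def F_def w_def N_def
    by (simp add: sum_subtractf[symmetric] algebra_simps power_add)
  have hsum: "(\<Sum>k<N. (cmod (h k))\<^sup>2) \<le> 4 * pi\<^sup>2 * real P / real q * (\<Sum>j<P. (cmod (\<alpha> j))\<^sup>2)"
  proof -
    have "(\<Sum>k<N. (cmod (h k))\<^sup>2) = real N * (\<Sum>j<P. (cmod (\<alpha> j * (w ^ j - 1)))\<^sup>2)"
      unfolding h_eq w_def by (rule parseval[OF PN])
    also have "\<dots> \<le> real N * (\<Sum>j<P. (cmod (\<alpha> j))\<^sup>2 * (2 * pi * P / N)\<^sup>2)"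
    proof (intro mult_left_mono sum_mono)
      fix j assume "j \<in> {..<P}"
      have "cmod (w ^ j - 1) \<le> 2 * pi * j / N" unfolding w_def by (rule omega_diff)
      also have "\<dots> \<le> 2 * pi * P / N" using \<open>j \<in> {..<P}\<close>
        by (intro divide_right_mono mult_left_mono) auto
      finally have "(cmod (w ^ j - 1))\<^sup>2 \<le> (2 * pi * P / N)\<^sup>2"
        by (intro power_mono) auto
      then show "(cmod (\<alpha> j * (w ^ j - 1)))\<^sup>2 \<le> (cmod (\<alpha> j))\<^sup>2 * (2 * pi * P / N)\<^sup>2"
        by (simp add: norm_mult power_mult_distrib mult_left_mono)
    qed simp
    also have "\<dots> = real N * (2 * pi * P / N)\<^sup>2 * (\<Sum>j<P. (cmod (\<alpha> j))\<^sup>2)"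
      by (simp only: sum_distrib_right[symmetric]) (simp only: mult_ac)
    also have "real N * (2 * pi * P / N)\<^sup>2 = 4 * pi\<^sup>2 * real P / real q"
      using P0 q0 unfolding N_def by (simp add: power2_eq_square field_simps)
    finally show ?thesis .
  qed
  define S where "S i = {(i*q div P)*P ..< i*q}" for i
  have ab: "(i*q div P)*P \<le> i*q" "i*q < (i*q div P)*P + P" for i
    using div_mult_mod_eq[of "i*q" P] mod_less_divisor[OF P0, of "i*q"] by linarith+
  have cardS: "card (S i) \<le> P" for i unfolding S_def using ab[of i] by simp
  have Fdiff: "F (i*q) - F ((i*q div P)*P) = (\<Sum>k\<in>S i. h k)" for i
    unfolding S_def h_def using sum_Suc_diff'[OF ab(1)[of i], of F] by simp
  have disj: "S i \<inter> S j = {}" if "i < j" for i j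
  proof -
    have "i*q + q \<le> j*q" using that by (metis mult_Suc less_eq_Suc_le mult_le_mono1 add.commute)
    then have "i*q \<le> (j*q div P)*P" using ab[of j] Pq by linarith
    then show ?thesis unfolding S_def by auto
  qed
  have "(\<Sum>i<P. (cmod (F (i*q) - F ((i*q div P)*P)))\<^sup>2)
      \<le> (\<Sum>i<P. real P * (\<Sum>k\<in>S i. (cmod (h k))\<^sup>2))"
  proof (rule sum_mono)
    fix i
    have "(cmod (\<Sum>k\<in>S i. h k))\<^sup>2 \<le> real (card (S i)) * (\<Sum>k\<in>S i. (cmod (h k))\<^sup>2)"
      by (rule cs_card) (simp add: S_def)
    also have "\<dots> \<le> real P * (\<Sum>k\<in>S i. (cmod (h k))\<^sup>2)"
      using cardS[of i] by (intro mult_right_mono) (auto simp: sum_nonneg)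
    finally show "(cmod (F (i*q) - F ((i*q div P)*P)))\<^sup>2 \<le> real P * (\<Sum>k\<in>S i. (cmod (h k))\<^sup>2)"
      by (simp add: Fdiff)
  qed
  also have "\<dots> = real P * (\<Sum>k\<in>(\<Union>i\<in>{..<P}. S i). (cmod (h k))\<^sup>2)"
    by (subst sum.UNION_disjoint) (auto simp: S_def sum_distrib_left intro: disj 
         dest: disj simp: linorder_neq_iff disjoint_iff)
  also have "\<dots> \<le> real P * (\<Sum>k<N. (cmod (h k))\<^sup>2)"
  proof (intro mult_left_mono sum_mono2)
    show "(\<Union>i\<in>{..<P}. S i) \<subseteq> {..<N}"
    proof
      fix k assume "k \<in> (\<Union>i\<in>{..<P}. S i)"
      then obtain i where "i < P" "k < i*q" unfolding S_def by auto
      then have "i*q < P*q" using q0 by (intro mult_less_mono1) auto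
      then show "k \<in> {..<N}" using \<open>k < i*q\<close> unfolding N_def lessThan_iff by linarith
    qed
  qed auto
  also have "\<dots> \<le> real P * (4 * pi\<^sup>2 * real P / real q * (\<Sum>j<P. (cmod (\<alpha> j))\<^sup>2))"
    using hsum by (intro mult_left_mono) auto
  finally show ?thesis by (simp add: power2_eq_square mult_ac)
qed


lemma idx'_eq: "0 < P \<Longrightarrow> idx' P q i = i * q div P"
proof -
  have "real q / real P * real i = real (i*q) / real P" by simp
  then show ?thesis unfolding idx'_def by (simp only: floor_divide_of_nat_eq nat_int)
qed

lemma main_bound:
  fixes \<alpha> :: "nat \<Rightarrow> complex" and P q :: nat
  assumes P0: "0 < P" and Pq: "P < q" and unit: "unit_superposition P \<alpha>"
    and ee: "4 * pi\<^sup>2 * real P / real q \<le> e\<^sup>2" and e0: "0 \<le> e" and e1: "e < 1"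
  shows "(\<Sum>i<P. \<bar>D_beta P (FT P P \<alpha>) i - D_gamma P q (FT q P \<alpha>) i\<bar>) \<le> 6 * e"
proof -
  define F where "F = (\<lambda>k. \<Sum>j<P. \<alpha> j * omega (P*q) ^ (j*k))"
  define I where "I i = i * q div P" for i
  define g where "g i = F (I i * P) / of_real (sqrt P)" for i
  have q0: "0 < q" using P0 Pq by auto
  have S1: "(\<Sum>j<P. (cmod (\<alpha> j))\<^sup>2) = 1" using unit unfolding unit_superposition_def .
  have beta: "FT P P \<alpha> i = F (i*q) / of_real (sqrt P)" for i
  proof -
    have "omega P ^ (j*i) = omega (P*q) ^ (j*(i*q))" for j
    proof -
      have "omega (P*q) ^ (j*(i*q)) = (omega (P*q) ^ q) ^ (j*i)"
        by (simp only: power_mult[symmetric] mult_ac)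
      then show ?thesis using omega_mult[OF q0, of P] by simp
    qed
    then show ?thesis unfolding FT_def F_def by (simp add: mult_ac)
  qed
  have gamma: "FT q P \<alpha> c = F (c*P) / of_real (sqrt q)" for c
  proof -
    have "omega q ^ (j*c) = omega (P*q) ^ (j*(c*P))" for j
    proof -
      have "omega (P*q) ^ (j*(c*P)) = (omega (q*P) ^ P) ^ (j*c)"
        by (simp only: power_mult[symmetric] mult_ac)
      then show ?thesis using omega_mult[OF P0, of q] by simp
    qed
    then show ?thesis unfolding FT_def F_def by (simp add: mult_ac)
  qed
  have gam_g: "(cmod (FT q P \<alpha> (idx' P q i)))\<^sup>2 = (real P / real q) * (cmod (g i))\<^sup>2" for i
    unfolding idx'_eq[OF P0] gamma g_def I_def using P0 q0
    by (simp add: norm_divide power_divide)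
  have Dg: "D_gamma P q (FT q P \<alpha>) i = (cmod (g i))\<^sup>2 / (\<Sum>l<P. (cmod (g l))\<^sup>2)" for i
    unfolding D_gamma_def gam_g sum_distrib_left[symmetric]
    by (rule mult_divide_mult_cancel_left) (use P0 q0 in simp)
  have Db: "D_beta P (FT P P \<alpha>) i = (cmod (FT P P \<alpha> i))\<^sup>2" for i
    unfolding D_beta_def ..
  have b1: "(\<Sum>i<P. (cmod (FT P P \<alpha> i))\<^sup>2) = 1"
  proof -
    have "(\<Sum>i<P. (cmod (FT P P \<alpha> i))\<^sup>2) = (\<Sum>i<P. (cmod (\<Sum>j<P. \<alpha> j * omega P ^ (j*i)))\<^sup>2) / P"
    proof -
      have "FT P P \<alpha> i = (\<Sum>j<P. \<alpha> j * omega P ^ (j*i)) / of_real (sqrt P)" for i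
        unfolding FT_def by (simp add: mult_ac)
      then have "(cmod (FT P P \<alpha> i))\<^sup>2 = (cmod (\<Sum>j<P. \<alpha> j * omega P ^ (j*i)))\<^sup>2 / P" for i
        using P0 by (simp add: norm_divide power_divide)
      then show ?thesis by (simp add: sum_divide_distrib)
    qed
    also have "\<dots> = 1" using parseval[of P P \<alpha>] S1 P0 by simp
    finally show ?thesis .
  qed
  have eb: "(\<Sum>i<P. (cmod (FT P P \<alpha> i - g i))\<^sup>2) \<le> e\<^sup>2"
  proof -
    have "(\<Sum>i<P. (cmod (FT P P \<alpha> i - g i))\<^sup>2) = (\<Sum>i<P. (cmod (F (i*q) - F ((i*q div P)*P)))\<^sup>2) / P"
      unfolding beta g_def I_def using P0
      by (simp add: norm_divide power_divide sum_divide_distrib diff_divide_distrib[symmetric])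
    also have "\<dots> \<le> (4 * pi\<^sup>2 * real P ^ 2 / real q * 1) / P"
      using diff_est[OF P0 less_imp_le[OF Pq], of \<alpha>] S1 unfolding F_def
      by (intro divide_right_mono) auto
    also have "\<dots> = 4 * pi\<^sup>2 * real P / real q" using P0 by (simp add: power2_eq_square)
    finally show ?thesis using ee by simp
  qed
  show ?thesis unfolding Db Dg
    using dist_lemma[of "{..<P}" "FT P P \<alpha>" g e] b1 eb e0 e1 by simp
qed


lemma beta_norm:
  assumes P0: "0 < P" and unit: "unit_superposition P \<alpha>"
  shows "(\<Sum>i<P. (cmod (FT P P \<alpha> i))\<^sup>2) = 1"
proof -
  have S1: "(\<Sum>j<P. (cmod (\<alpha> j))\<^sup>2) = 1" using unit unfolding unit_superposition_def .
  have "FT P P \<alpha> i = (\<Sum>j<P. \<alpha> j * omega P ^ (j*i)) / of_real (sqrt P)" for i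
    unfolding FT_def by (simp add: mult_ac)
  then have "(cmod (FT P P \<alpha> i))\<^sup>2 = (cmod (\<Sum>j<P. \<alpha> j * omega P ^ (j*i)))\<^sup>2 / P" for i
    using P0 by (simp add: norm_divide power_divide)
  then have "(\<Sum>i<P. (cmod (FT P P \<alpha> i))\<^sup>2) = (\<Sum>i<P. (cmod (\<Sum>j<P. \<alpha> j * omega P ^ (j*i)))\<^sup>2) / P"
    by (simp add: sum_divide_distrib)
  also have "\<dots> = 1" using parseval[of P P \<alpha>] S1 P0 by simp
  finally show ?thesis .
qed

lemma trivial_bound:
  assumes P0: "0 < P" and unit: "unit_superposition P \<alpha>"
  shows "(\<Sum>i<P. \<bar>D_beta P (FT P P \<alpha>) i - D_gamma P q (FT q P \<alpha>) i\<bar>) \<le> 2"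
proof -
  define x where "x i = (cmod (FT q P \<alpha> (idx' P q i)))\<^sup>2" for i
  have "(\<Sum>i<P. \<bar>D_beta P (FT P P \<alpha>) i - D_gamma P q (FT q P \<alpha>) i\<bar>)
      \<le> (\<Sum>i<P. D_beta P (FT P P \<alpha>) i + D_gamma P q (FT q P \<alpha>) i)"
  proof (rule sum_mono)
    fix i
    have "0 \<le> D_beta P (FT P P \<alpha>) i" "0 \<le> D_gamma P q (FT q P \<alpha>) i"
      by (auto simp: D_beta_def D_gamma_def intro!: divide_nonneg_nonneg sum_nonneg)
    then show "\<bar>D_beta P (FT P P \<alpha>) i - D_gamma P q (FT q P \<alpha>) i\<bar>
      \<le> D_beta P (FT P P \<alpha>) i + D_gamma P q (FT q P \<alpha>) i"
      by (simp only: abs_le_iff) linarith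
  qed
  also have "\<dots> = 1 + (\<Sum>i<P. x i) / (\<Sum>l<P. x l)"
    by (simp add: sum.distrib D_beta_def beta_norm[OF P0 unit] D_gamma_def x_def flip: sum_divide_distrib)
  also have "(\<Sum>i<P. x i) / (\<Sum>l<P. x l) \<le> 1"
    by (cases "(\<Sum>l<P. x l) = 0") auto
  finally show ?thesis by simp
qed

theorem theorem1:
  fixes p :: "nat \<Rightarrow> nat"
  assumes ppos: "\<forall>n. p n > 0"
    and pbound: "\<exists>k::nat. (\<lambda>n. real (p n)) \<in> O(\<lambda>n. 2 ^ (n ^ k))"
  shows "\<forall>s :: real poly. (\<forall>n::nat. poly s (real n) > 0) \<longrightarrow>
           (\<exists>t :: real poly. \<forall>(n::nat) (q::nat) (\<alpha>::nat \<Rightarrow> complex).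
              q > p n \<longrightarrow> real q \<ge> poly t (real n) * real (p n) \<longrightarrow>
              unit_superposition (p n) \<alpha> \<longrightarrow>
              (\<Sum>i<p n. \<bar>D_beta (p n) (FT (p n) (p n) \<alpha>) i
                         - D_gamma (p n) q (FT q (p n) \<alpha>) i\<bar>) \<le> 1 / poly s (real n))"
proof (intro allI impI)
  fix s :: "real poly"
  assume spos: "\<forall>n::nat. poly s (real n) > 0"
  show "\<exists>t :: real poly. \<forall>(n::nat) (q::nat) (\<alpha>::nat \<Rightarrow> complex).
              q > p n \<longrightarrow> real q \<ge> poly t (real n) * real (p n) \<longrightarrow>
              unit_superposition (p n) \<alpha> \<longrightarrow>
              (\<Sum>i<p n. \<bar>D_beta (p n) (FT (p n) (p n) \<alpha>) i
                         - D_gamma (p n) q (FT q (p n) \<alpha>) i\<bar>) \<le> 1 / poly s (real n)"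
  proof (intro exI[of _ "smult 2304 (s * s)"] allI impI)
    fix n q and \<alpha> :: "nat \<Rightarrow> complex"
    assume Pq: "p n < q" and qt: "poly (smult 2304 (s * s)) (real n) * real (p n) \<le> real q"
      and unit: "unit_superposition (p n) \<alpha>"
    define P where "P = p n"
    define S where "S = poly s (real n)"
    have P0: "0 < P" using ppos unfolding P_def by auto
    have S0: "0 < S" using spos unfolding S_def by auto
    have qt': "2304 * S\<^sup>2 * real P \<le> real q" using qt unfolding S_def P_def by (simp add: power2_eq_square)
    show "(\<Sum>i<p n. \<bar>D_beta (p n) (FT (p n) (p n) \<alpha>) i
                         - D_gamma (p n) q (FT q (p n) \<alpha>) i\<bar>) \<le> 1 / poly s (real n)"
    proof (cases "S \<le> 1/2")
      case True
      then have "2 \<le> 1 / S" using S0 by (simp add: field_simps)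
      then show ?thesis using trivial_bound[OF P0 unit[folded P_def], of q] unfolding P_def S_def by linarith
    next
      case False
      define e where "e = 1 / (6 * S)"
      have e0: "0 \<le> e" and e1: "e < 1" using False S0 unfolding e_def by (auto simp: field_simps)
      have q0: "0 < real q" using Pq P0 unfolding P_def by simp
      have "4 * pi\<^sup>2 * real P / real q \<le> 64 * real P / real q"
      proof -
        have "pi\<^sup>2 \<le> 4\<^sup>2" using pi_less_4 pi_gt_zero by (intro power_mono) auto
        then have "4 * pi\<^sup>2 * real P \<le> 64 * real P" by (intro mult_right_mono) auto
        then show ?thesis using q0 by (intro divide_right_mono) auto
      qed
      also have "\<dots> \<le> e\<^sup>2"
      proof -
        have "64 * real P * (36 * S\<^sup>2) \<le> real q" using qt' by (simp add: mult_ac)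
        then show ?thesis unfolding e_def using q0 S0
          by (simp add: power_divide power_mult_distrib field_simps)
      qed
      finally have ee: "4 * pi\<^sup>2 * real P / real q \<le> e\<^sup>2" .
      have "(\<Sum>i<P. \<bar>D_beta P (FT P P \<alpha>) i - D_gamma P q (FT q P \<alpha>) i\<bar>) \<le> 6 * e"
        using main_bound[OF P0 Pq[folded P_def] unit[folded P_def] ee e0 e1] .
      also have "6 * e = 1 / S" unfolding e_def using S0 by simp
      finally have "(\<Sum>i<P. \<bar>D_beta P (FT P P \<alpha>) i - D_gamma P q (FT q P \<alpha>) i\<bar>) \<le> 1 / S" .
      then show ?thesis unfolding P_def S_def .
    qed
  qed
qed

end
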